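(* Assume $n=\sum_l c_l$, let $\pi'$ maximize $\sum_i g_{\pi_i}(x_i)$ over $\Pi_{\mathbf x,\mathbf y,\mathbf l}$, and let $\mathbf g'$ be as defined from an optimal dual solution $(\hat{\mathbf u},\hat{\mathbf v})$ ($g'_l(x_i)=\hat u_i+\hat v_l$ if $\pi'_i=l$, else $g_l(x_i)$). Then $\|\mathbf g'-\mathbf g\|_1\le\|\mathbf g''-\mathbf g\|_1$ for every $\pi''\in\Pi_{\mathbf x,\mathbf y,\mathbf l}$ and every $\mathbf g''$ with $\pi''\in\hat\Pi(\mathbf g'')$; that is, $\mathbf g'$ is a minimal modification of $\mathbf g$ under which some counterfactually harmless assignment maximizes predicted utility.
   Context: Setup: a pool $\mathcal I$ of $n$ refugees with features $\mathbf x=(x_i)$, realized placements $\mathbf l=(l_i)\in\mathcal L^n$ and outcomes $\mathbf y\in\{0,1\}^n$; finite location set $\mathcal L$ with capacities $c_l$; predicted probabilities $\mathbf g=(g_l(x_i))\in[0,1]^{\mathcal I\times\mathcal L}$. An assignment is a map $\pi:\mathcal I\to\mathcal L$ with $|\{i:\pi_i=l\}|\le c_l$. For a weight matrix $\mathbf h$, $\hat\Pi(\mathbf h)$ is the set of assignments maximizing $\sum_i h_{\pi_i}(x_i)$. $\Pi_{\mathbf x,\mathbf y,\mathbf l}$ is the set of assignments with $\pi_i=l_i$ whenever $y_i=1$. The dual linear program is $\min \sum_i u_i+\sum_l c_lv_l$ s.t. $u_i+v_l\ge g_l(x_i)$ for all $i,l$, $u_i,v_l\ge0$. $\|\cdot\|_1$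 is the entrywise $\ell_1$ norm. *)

theory Defs
  imports Complex_Main
begin

text \<open>Refugees are a finite set I of type 'i, locations a finite set L of type 'l,
  capacities c :: 'l => nat. Weight matrices are functions 'i => 'l => real,
  with h i l standing for h_l(x_i).\<close>

definition is_assignment :: "'i set \<Rightarrow> 'l set \<Rightarrow> ('l \<Rightarrow> nat) \<Rightarrow> ('i \<Rightarrow> 'l) \<Rightarrow> bool" where
  "is_assignment I L c \<pi> \<longleftrightarrow>
     (\<forall>i\<in>I. \<pi> i \<in> L) \<and> (\<forall>l\<in>L. card {i\<in>I. \<pi> i = l} \<le> c l)"

definition utility :: "'i set \<Rightarrow> ('i \<Rightarrow> 'l \<Rightarrow> real) \<Rightarrow> ('i \<Rightarrow> 'l) \<Rightarrow> real" where
  "utility I h \<pi> = (\<Sum>i\<in>I. h i (\<pi> i))"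

definition optimal_assignment ::
  "'i set \<Rightarrow> 'l set \<Rightarrow> ('l \<Rightarrow> nat) \<Rightarrow> ('i \<Rightarrow> 'l \<Rightarrow> real) \<Rightarrow> ('i \<Rightarrow> 'l) \<Rightarrow> bool" where
  "optimal_assignment I L c h \<pi> \<longleftrightarrow>
     is_assignment I L c \<pi> \<and>
     (\<forall>\<sigma>. is_assignment I L c \<sigma> \<longrightarrow> utility I h \<sigma> \<le> utility I h \<pi>)"

definition harmless_assignment ::
  "'i set \<Rightarrow> 'l set \<Rightarrow> ('l \<Rightarrow> nat) \<Rightarrow> ('i \<Rightarrow> bool) \<Rightarrow> ('i \<Rightarrow> 'l) \<Rightarrow> ('i \<Rightarrow> 'l) \<Rightarrow> bool" where
  "harmless_assignment I L c y lr \<pi> \<longleftrightarrow>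
     is_assignment I L c \<pi> \<and> (\<forall>i\<in>I. y i \<longrightarrow> \<pi> i = lr i)"

definition dual_feasible ::
  "'i set \<Rightarrow> 'l set \<Rightarrow> ('i \<Rightarrow> 'l \<Rightarrow> real) \<Rightarrow> ('i \<Rightarrow> real) \<Rightarrow> ('l \<Rightarrow> real) \<Rightarrow> bool" where
  "dual_feasible I L g u v \<longleftrightarrow>
     (\<forall>i\<in>I. \<forall>l\<in>L. u i + v l \<ge> g i l) \<and> (\<forall>i\<in>I. u i \<ge> 0) \<and> (\<forall>l\<in>L. v l \<ge> 0)"

definition dual_objective ::
  "'i set \<Rightarrow> 'l set \<Rightarrow> ('l \<Rightarrow> nat) \<Rightarrow> ('i \<Rightarrow> real) \<Rightarrow> ('l \<Rightarrow> real) \<Rightarrow> real" where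
  "dual_objective I L c u v = (\<Sum>i\<in>I. u i) + (\<Sum>l\<in>L. real (c l) * v l)"

definition dual_optimal ::
  "'i set \<Rightarrow> 'l set \<Rightarrow> ('l \<Rightarrow> nat) \<Rightarrow> ('i \<Rightarrow> 'l \<Rightarrow> real) \<Rightarrow> ('i \<Rightarrow> real) \<Rightarrow> ('l \<Rightarrow> real) \<Rightarrow> bool" where
  "dual_optimal I L c g u v \<longleftrightarrow>
     dual_feasible I L g u v \<and>
     (\<forall>u' v'. dual_feasible I L g u' v' \<longrightarrow>
        dual_objective I L c u v \<le> dual_objective I L c u' v')"

definition l1_dist :: "'i set \<Rightarrow> 'l set \<Rightarrow> ('i \<Rightarrow> 'l \<Rightarrow> real) \<Rightarrow> ('i \<Rightarrow> 'l \<Rightarrow> real) \<Rightarrow> real" where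
  "l1_dist I L a b = (\<Sum>i\<in>I. \<Sum>l\<in>L. \<bar>a i l - b i l\<bar>)"

end

theory Submission
  imports Defs
begin


lemma hall_b:
  fixes E :: "'i \<Rightarrow> 'l \<Rightarrow> bool" and c :: "'l \<Rightarrow> nat"
  assumes "finite I" "finite L"
    "\<forall>S\<subseteq>I. card S \<le> (\<Sum>l\<in>{l\<in>L. \<exists>i\<in>S. E i l}. c l)"
  shows "\<exists>\<sigma>. (\<forall>i\<in>I. \<sigma> i \<in> L \<and> E i (\<sigma> i)) \<and> (\<forall>l\<in>L. card {i\<in>I. \<sigma> i = l} \<le> c l)"
  using assms
proof (induction "card I" arbitrary: I c rule: less_induct)
  case less
  define N where "N S = {l\<in>L. \<exists>i\<in>S. E i l}" for S
  have finN: "finite (N S)" for S using less.prems(2) by (simp add: N_def)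
  have cond: "\<forall>S\<subseteq>I. card S \<le> (\<Sum>l\<in>N S. c l)" using less.prems(3) by (simp add: N_def)
  show ?case
  proof (cases "\<exists>S. S \<noteq> {} \<and> S \<subset> I \<and> (\<Sum>l\<in>N S. c l) \<le> card S")
    case True
    then obtain S where S: "S \<noteq> {}" "S \<subset> I" "(\<Sum>l\<in>N S. c l) \<le> card S" by blast
    have finS: "finite S" using S less.prems(1) finite_subset psubset_imp_subset by blast
    have cS: "card S < card I" using S(2) less.prems(1) psubset_card_mono by blast
    have condS: "\<forall>T\<subseteq>S. card T \<le> (\<Sum>l\<in>{l\<in>L. \<exists>i\<in>T. E i l}. c l)"
      using less.prems(3) S(2) by (meson order.trans psubset_imp_subset)
    obtain \<sigma>1 where s1: "\<forall>i\<in>S. \<sigma>1 i \<in> L \<and> E i (\<sigma>1 i)" "\<forall>l\<in>L. card {i\<in>S. \<sigma>1 i = l} \<le> c l"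
      using less.hyps[OF cS finS less.prems(2) condS] by blast
    define c' where "c' l = (if l \<notin> N S then c l else 0)" for l
    have condR: "\<forall>T\<subseteq>I-S. card T \<le> (\<Sum>l\<in>{l\<in>L. \<exists>i\<in>T. E i l}. c' l)"
    proof (intro allI impI)
      fix T assume T: "T \<subseteq> I - S"
      have finT: "finite T" using T less.prems(1) finite_subset by blast
      have "card T + card S = card (T \<union> S)" using T finT finS by (subst card_Un_disjoint) auto
      also have "\<dots> \<le> (\<Sum>l\<in>N (T\<union>S). c l)"
      proof -
        have "T \<union> S \<subseteq> I" using T S(2) by auto
        then show ?thesis using cond by blast
      qed
      also have "N (T\<union>S) = (N T - N S) \<union> N S" by (auto simp: N_def)
      also have "(\<Sum>l\<in>(N T - N S) \<union> N S. c l) = (\<Sum>l\<in>N T - N S. c l) + (\<Sum>l\<in>N S. c l)"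
        using finN by (subst sum.union_disjoint) auto
      also have "(\<Sum>l\<in>N T - N S. c l) = (\<Sum>l\<in>N T. c' l)"
      proof -
        have "(\<Sum>l\<in>N T. c' l) = (\<Sum>l\<in>{l\<in>N T. l \<notin> N S}. c l)"
          unfolding c'_def using finN by (subst sum.inter_filter) auto
        also have "{l\<in>N T. l \<notin> N S} = N T - N S" by auto
        finally show ?thesis by simp
      qed
      finally show "card T \<le> (\<Sum>l\<in>{l\<in>L. \<exists>i\<in>T. E i l}. c' l)" using S(3) by (simp add: N_def)
    qed
    have cR: "card (I - S) < card I" 
    proof -
      have "card (I - S) = card I - card S" using S(2) finS by (simp add: card_Diff_subset psubset_imp_subset)
      moreover have "card S > 0" using S(1) finS by (simp add: card_gt_0_iff)
      ultimately show ?thesis using cS by linarith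
    qed
    obtain \<sigma>2 where s2: "\<forall>i\<in>I-S. \<sigma>2 i \<in> L \<and> E i (\<sigma>2 i)" "\<forall>l\<in>L. card {i\<in>I-S. \<sigma>2 i = l} \<le> c' l"
      using less.hyps[OF cR _ less.prems(2) condR] less.prems(1) by blast
    define \<sigma> where "\<sigma> i = (if i \<in> S then \<sigma>1 i else \<sigma>2 i)" for i
    have "\<forall>i\<in>I. \<sigma> i \<in> L \<and> E i (\<sigma> i)" using s1(1) s2(1) by (auto simp: \<sigma>_def)
    moreover have "\<forall>l\<in>L. card {i\<in>I. \<sigma> i = l} \<le> c l"
    proof
      fix l assume l: "l \<in> L"
      have eq: "{i\<in>I. \<sigma> i = l} = {i\<in>S. \<sigma>1 i = l} \<union> {i\<in>I-S. \<sigma>2 i = l}"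
        using S(2) by (auto simp: \<sigma>_def)
      have le: "card {i\<in>I. \<sigma> i = l} \<le> card {i\<in>S. \<sigma>1 i = l} + card {i\<in>I-S. \<sigma>2 i = l}"
        unfolding eq by (rule card_Un_le)
      show "card {i\<in>I. \<sigma> i = l} \<le> c l"
      proof (cases "l \<in> N S")
        case True
        then have "card {i\<in>I-S. \<sigma>2 i = l} = 0" using s2(2) l by (auto simp: c'_def)
        then show ?thesis using le s1(2) l by auto
      next
        case False
        then have "{i\<in>S. \<sigma>1 i = l} = {}" using s1(1) by (auto simp: N_def)
        then have e: "card {i\<in>S. \<sigma>1 i = l} = 0" by (metis card.empty)
        have "card {i\<in>I-S. \<sigma>2 i = l} \<le> c' l" using s2(2) l by blast
        then have "card {i\<in>I-S. \<sigma>2 i = l} \<le> c l" using False by (simp add: c'_def)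
        then show ?thesis using le e by linarith
      qed
    qed
    ultimately show ?thesis by blast
  next
    case False
    show ?thesis
    proof (cases "I = {}")
      case True then show ?thesis by auto
    next
      case False2: False
      then obtain i0 where i0: "i0 \<in> I" by blast
      have "card {i0} \<le> (\<Sum>l\<in>N {i0}. c l)" using cond i0 by blast
      have "\<exists>l0\<in>N {i0}. c l0 > 0"
      proof (rule ccontr)
        assume "\<not> (\<exists>l0\<in>N {i0}. c l0 > 0)"
        then have "(\<Sum>l\<in>N {i0}. c l) = 0" by simp
        with \<open>card {i0} \<le> (\<Sum>l\<in>N {i0}. c l)\<close> show False by simp
      qed
      then obtain l0 where l0: "l0 \<in> L" "E i0 l0" "c l0 > 0" by (auto simp: N_def)
      define c' where "c' = c(l0 := c l0 - 1)"
      have sumle: "(\<Sum>l\<in>A. c l) \<le> (\<Sum>l\<in>A. c' l) + 1" if "finite A" for A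
      proof (cases "l0 \<in> A")
        case True
        have "(\<Sum>l\<in>A. c l) = c l0 + (\<Sum>l\<in>A-{l0}. c l)" using True that by (simp add: sum.remove)
        moreover have "(\<Sum>l\<in>A. c' l) = c' l0 + (\<Sum>l\<in>A-{l0}. c' l)" using True that by (simp add: sum.remove)
        moreover have "(\<Sum>l\<in>A-{l0}. c' l) = (\<Sum>l\<in>A-{l0}. c l)" by (rule sum.cong) (auto simp: c'_def)
        ultimately show ?thesis by (simp add: c'_def)
      next
        case False
        have "(\<Sum>l\<in>A. c' l) = (\<Sum>l\<in>A. c l)" by (rule sum.cong) (use False in \<open>auto simp: c'_def\<close>)
        then show ?thesis by simp
      qed
      have condR: "\<forall>T\<subseteq>I-{i0}. card T \<le> (\<Sum>l\<in>{l\<in>L. \<exists>i\<in>T. E i l}. c' l)"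
      proof (intro allI impI)
        fix T assume T: "T \<subseteq> I - {i0}"
        show "card T \<le> (\<Sum>l\<in>{l\<in>L. \<exists>i\<in>T. E i l}. c' l)"
        proof (cases "T = {}")
          case True then show ?thesis by simp
        next
          case False3: False
          have "T \<subset> I" using T i0 by auto
          then have "\<not> (\<Sum>l\<in>N T. c l) \<le> card T" using False False3 by blast
          then have "card T < (\<Sum>l\<in>N T. c l)" by simp
          moreover have "(\<Sum>l\<in>N T. c l) \<le> (\<Sum>l\<in>N T. c' l) + 1" using sumle finN by blast
          ultimately show ?thesis by (simp add: N_def)
        qed
      qed
      have cR: "card (I - {i0}) < card I" using i0 less.prems(1) by (metis card_Diff1_less)
      obtain \<sigma>' where s': "\<forall>i\<in>I-{i0}. \<sigma>' i \<in> L \<and> E i (\<sigma>' i)" "\<forall>l\<in>L. card {i\<in>I-{i0}. \<sigma>' i = l} \<le> c' l"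
        using less.hyps[OF cR _ less.prems(2) condR] less.prems(1) by blast
      define \<sigma> where "\<sigma> = \<sigma>'(i0 := l0)"
      have "\<forall>i\<in>I. \<sigma> i \<in> L \<and> E i (\<sigma> i)" using s'(1) l0 by (auto simp: \<sigma>_def)
      moreover have "\<forall>l\<in>L. card {i\<in>I. \<sigma> i = l} \<le> c l"
      proof
        fix l assume l: "l \<in> L"
        show "card {i\<in>I. \<sigma> i = l} \<le> c l"
        proof (cases "l = l0")
          case True
          have eq: "{i\<in>I. \<sigma> i = l} = insert i0 {i\<in>I-{i0}. \<sigma>' i = l}" using True i0 by (auto simp: \<sigma>_def)
          have "card {i\<in>I. \<sigma> i = l} \<le> Suc (card {i\<in>I-{i0}. \<sigma>' i = l})"
            unfolding eq using less.prems(1) by (simp add: card_insert_if)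
          then show ?thesis using s'(2) l True l0(3) by (fastforce simp: c'_def)
        next
          case False
          have eq: "{i\<in>I. \<sigma> i = l} = {i\<in>I-{i0}. \<sigma>' i = l}" using False by (auto simp: \<sigma>_def)
          have "card {i\<in>I-{i0}. \<sigma>' i = l} \<le> c' l" using s'(2) l by blast
          then show ?thesis using eq False by (simp add: c'_def)
        qed
      qed
      ultimately show ?thesis by blast
    qed
  qed
qed



lemma sum_by_loc:
  assumes "finite I" "finite L" "\<forall>i\<in>I. \<sigma> i \<in> L"
  shows "(\<Sum>i\<in>I. f (\<sigma> i)) = (\<Sum>l\<in>L. real (card {i\<in>I. \<sigma> i = l}) * (f l::real))"
proof -
  have "(\<Sum>l\<in>L. \<Sum>i\<in>{i. i\<in>I \<and> \<sigma> i = l}. f (\<sigma> i)) = (\<Sum>i\<in>I. f (\<sigma> i))"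
    using sum.group[OF assms(1,2), of \<sigma> "\<lambda>i. f (\<sigma> i)"] assms(3) by auto
  moreover have "(\<Sum>i\<in>{i. i\<in>I \<and> \<sigma> i = l}. f (\<sigma> i)) = real (card {i\<in>I. \<sigma> i = l}) * f l" for l
  proof -
    have "(\<Sum>i\<in>{i. i\<in>I \<and> \<sigma> i = l}. f (\<sigma> i)) = (\<Sum>i\<in>{i. i\<in>I \<and> \<sigma> i = l}. f l)"
      by (rule sum.cong) auto
    then show ?thesis by simp
  qed
  ultimately show ?thesis by simp
qed

lemma counts_exact:
  assumes "finite I" "finite L" "card I = (\<Sum>l\<in>L. c l)" "is_assignment I L c \<sigma>"
  shows "\<forall>l\<in>L. card {i\<in>I. \<sigma> i = l} = c l"
proof (rule ccontr)
  assume "\<not> ?thesis"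
  then obtain l0 where l0: "l0 \<in> L" "card {i\<in>I. \<sigma> i = l0} < c l0"
    using assms(4) unfolding is_assignment_def by (meson le_neq_implies_less)
  have le: "\<forall>l\<in>L. card {i\<in>I. \<sigma> i = l} \<le> c l" using assms(4) unfolding is_assignment_def by blast
  have "(\<Sum>l\<in>L. card {i\<in>I. \<sigma> i = l}) < (\<Sum>l\<in>L. c l)"
    using sum_strict_mono_ex1[OF assms(2) le] l0 by blast
  moreover have "(\<Sum>l\<in>L. card {i\<in>I. \<sigma> i = l}) = card I"
  proof -
    have "(\<Sum>l\<in>L. \<Sum>i\<in>{i. i\<in>I \<and> \<sigma> i = l}. (1::nat)) = (\<Sum>i\<in>I. 1)"
      using sum.group[OF assms(1,2), of \<sigma> "\<lambda>i. 1::nat"] assms(4) unfolding is_assignment_def by auto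
    then show ?thesis by simp
  qed
  ultimately show False using assms(3) by simp
qed

lemma pos_lower:
  assumes "finite (A::real set)" "\<forall>a\<in>A. a > 0"
  shows "\<exists>e>0. \<forall>a\<in>A. e \<le> a"
proof -
  have "Min (insert 1 A) > 0" using assms by simp
  moreover have "\<forall>a\<in>A. Min (insert 1 A) \<le> a" using assms(1) by simp
  ultimately show ?thesis by blast
qed

lemma exists_good:
  fixes G :: "'i \<Rightarrow> 'l \<Rightarrow> real"
  assumes finI: "finite I" and finL: "finite L" and cap: "card I = (\<Sum>l\<in>L. c l)"
    and Gnn: "\<forall>i\<in>I. \<forall>l\<in>L. 0 \<le> G i l"
    and dopt: "dual_optimal I L c G u v"
  shows "\<exists>\<sigma>. is_assignment I L c \<sigma> \<and> dual_objective I L c u v \<le> utility I G \<sigma>"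
proof -
  have feas: "dual_feasible I L G u v" using dopt unfolding dual_optimal_def by blast
  have opt: "\<And>u' v'. dual_feasible I L G u' v' \<Longrightarrow> dual_objective I L c u v \<le> dual_objective I L c u' v'"
    using dopt unfolding dual_optimal_def by blast
  have F1: "\<forall>i\<in>I. \<forall>l\<in>L. u i + v l \<ge> G i l" and F2: "\<forall>i\<in>I. u i \<ge> 0" and F3: "\<forall>l\<in>L. v l \<ge> 0"
    using feas unfolding dual_feasible_def by auto
  define E where "E i l \<longleftrightarrow> u i + v l = G i l" for i l
  have hallc: "\<forall>S\<subseteq>I. card S \<le> (\<Sum>l\<in>{l\<in>L. \<exists>i\<in>S. E i l}. c l)"
  proof (rule ccontr)
    assume "\<not> ?thesis"
    then obtain S where S: "S \<subseteq> I" "(\<Sum>l\<in>{l\<in>L. \<exists>i\<in>S. E i l}. c l) < card S"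
      by (meson not_le)
    define N where "N = {l\<in>L. \<exists>i\<in>S. E i l}"
    have Slt: "(\<Sum>l\<in>N. real (c l)) < real (card S)" using S(2) unfolding N_def
      by (metis of_nat_less_iff of_nat_sum)
    have finS: "finite S" using S(1) finI finite_subset by blast
    have NL: "N \<subseteq> L" unfolding N_def by auto
    have finN: "finite N" using NL finL finite_subset by blast
    define A where "A = {u i + v l - G i l | i l. i\<in>S \<and> l\<in>L-N} \<union> {u i | i. i\<in>S \<and> u i > 0}
        \<union> {v l | l. l \<in> L-N \<and> v l > 0}"
    have "A \<subseteq> (\<lambda>(i,l). u i + v l - G i l) ` (S \<times> L) \<union> u ` S \<union> v ` L" unfolding A_def by force
    then have finA: "finite A" using finS finL by (meson finite_SigmaI finite_Un finite_imageI finite_subset)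
    have posA: "\<forall>a\<in>A. a > 0"
    proof
      fix a assume "a \<in> A"
      then consider (s) i l where "a = u i + v l - G i l" "i\<in>S" "l\<in>L-N" | (u) "a > 0"
        unfolding A_def by blast
      then show "a > 0"
      proof cases
        case s
        then have "\<not> E i l" unfolding N_def by auto
        moreover have "u i + v l \<ge> G i l" using F1 s S(1) by auto
        ultimately show ?thesis using s unfolding E_def by auto
      qed
    qed
    obtain e where e: "e > 0" "\<forall>a\<in>A. e \<le> a" using pos_lower[OF finA posA] by blast
    have eslack: "e \<le> u i + v l - G i l" if "i\<in>S" "l\<in>L-N" for i l
      using e(2) that unfolding A_def by blast
    have sumI: "(\<Sum>i\<in>I. if i \<in> S then e else 0) = e * card S"
    proof -
      have "(\<Sum>i\<in>I. if i \<in> S then e else 0) = (\<Sum>i\<in>{i\<in>I. i\<in>S}. e)"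
        using finI by (rule sum.inter_filter[symmetric])
      also have "{i\<in>I. i\<in>S} = S" using S(1) by auto
      finally show ?thesis by simp
    qed
    have sumIc: "(\<Sum>i\<in>I. if i \<notin> S then e else 0) = e * (real (card I) - card S)"
    proof -
      have "(\<Sum>i\<in>I. if i \<notin> S then e else 0) = (\<Sum>i\<in>{i\<in>I. i\<notin>S}. e)"
        using finI by (rule sum.inter_filter[symmetric])
      also have "{i\<in>I. i\<notin>S} = I - S" by auto
      finally have 1: "(\<Sum>i\<in>I. if i \<notin> S then e else 0) = e * real (card (I - S))" by (simp add: mult.commute)
      have "real (card (I - S)) = real (card I) - card S"
        using S(1) finS by (simp add: card_Diff_subset of_nat_diff card_mono finI)
      then show ?thesis using 1 by simp
    qed
    have sumN: "(\<Sum>l\<in>L. real (c l) * (if l \<in> N then e else 0)) = e * (\<Sum>l\<in>N. real (c l))"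
    proof -
      have "(\<Sum>l\<in>L. real (c l) * (if l \<in> N then e else 0)) = (\<Sum>l\<in>L. if l \<in> N then e * real (c l) else 0)"
        by (rule sum.cong) auto
      also have "\<dots> = (\<Sum>l\<in>{l\<in>L. l\<in>N}. e * real (c l))" using finL by (rule sum.inter_filter[symmetric])
      also have "{l\<in>L. l\<in>N} = N" using NL by auto
      finally show ?thesis by (simp add: sum_distrib_left)
    qed
    have sumNc: "(\<Sum>l\<in>L. real (c l) * (if l \<notin> N then e else 0)) = e * (real (card I) - (\<Sum>l\<in>N. real (c l)))"
    proof -
      have "(\<Sum>l\<in>L. real (c l) * (if l \<notin> N then e else 0)) = (\<Sum>l\<in>L. if l \<notin> N then e * real (c l) else 0)"
        by (rule sum.cong) auto
      also have "\<dots> = (\<Sum>l\<in>{l\<in>L. l\<notin>N}. e * real (c l))" using finL by (rule sum.inter_filter[symmetric])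
      also have "{l\<in>L. l\<notin>N} = L - N" by auto
      finally have 1: "(\<Sum>l\<in>L. real (c l) * (if l \<notin> N then e else 0)) = e * (\<Sum>l\<in>L-N. real (c l))"
        by (simp add: sum_distrib_left)
      have "(\<Sum>l\<in>L. real (c l)) = (\<Sum>l\<in>L-N. real (c l)) + (\<Sum>l\<in>N. real (c l))"
        using finL NL by (simp add: sum.subset_diff)
      moreover have "(\<Sum>l\<in>L. real (c l)) = real (card I)" using cap by simp
      ultimately show ?thesis using 1 by simp
    qed
    show False
    proof (cases "\<forall>i\<in>S. u i > 0")
      case True
      define u' where "u' i = u i - (if i \<in> S then e else 0)" for i
      define v' where "v' l = v l + (if l \<in> N then e else 0)" for l
      have "dual_feasible I L G u' v'"
        unfolding dual_feasible_def
      proof (intro conjI ballI)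
        fix i l assume il: "i \<in> I" "l \<in> L"
        show "G i l \<le> u' i + v' l"
        proof (cases "i \<in> S \<and> l \<notin> N")
          case True then show ?thesis using eslack[of i l] il e(1) by (auto simp: u'_def v'_def)
        next
          case False
          have "G i l \<le> u i + v l" using F1 il by blast
          then show ?thesis using False e(1) by (auto simp: u'_def v'_def)
        qed
      next
        fix i assume i: "i \<in> I"
        show "0 \<le> u' i"
        proof (cases "i \<in> S")
          case iS: True
          then have "u i \<in> A" using True unfolding A_def by blast
          then show ?thesis using e(2) iS by (auto simp: u'_def)
        next
          case False then show ?thesis using F2 i by (simp add: u'_def)
        qed
      next
        fix l assume "l \<in> L" then show "0 \<le> v' l" using F3 e(1) by (simp add: v'_def)
      qed
      then have o: "dual_objective I L c u v \<le> dual_objective I L c u' v'" by (rule opt)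
      have "dual_objective I L c u' v' = dual_objective I L c u v - e * card S + e * (\<Sum>l\<in>N. real (c l))"
        unfolding dual_objective_def u'_def v'_def
        by (simp add: sum_subtractf sum.distrib distrib_left sumI sumN)
      moreover have "e * (\<Sum>l\<in>N. real (c l)) < e * card S" using Slt e(1) by simp
      ultimately show False using o by linarith
    next
      case False
      then obtain i1 where i1: "i1 \<in> S" "u i1 \<le> 0" by auto
      have u0: "u i1 = 0" using i1 F2 S(1) by force
      have vpos: "v l > 0" if "l \<in> L - N" for l
      proof (rule ccontr)
        assume "\<not> v l > 0"
        then have "v l = 0" using F3 that by force
        moreover have "G i1 l \<le> 0" using F1 i1 S(1) that u0 \<open>v l = 0\<close> by force
        moreover have "G i1 l \<ge> 0" using Gnn i1 S(1) that by blast
        ultimately have "E i1 l" using u0 unfolding E_def by simp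
        then show False using that i1 unfolding N_def by auto
      qed
      define u' where "u' i = u i + (if i \<notin> S then e else 0)" for i
      define v' where "v' l = v l - (if l \<notin> N then e else 0)" for l
      have "dual_feasible I L G u' v'"
        unfolding dual_feasible_def
      proof (intro conjI ballI)
        fix i l assume il: "i \<in> I" "l \<in> L"
        show "G i l \<le> u' i + v' l"
        proof (cases "i \<in> S \<and> l \<notin> N")
          case True then show ?thesis using eslack[of i l] il e(1) by (auto simp: u'_def v'_def)
        next
          case False
          have "G i l \<le> u i + v l" using F1 il by blast
          then show ?thesis using False e(1) by (auto simp: u'_def v'_def)
        qed
      next
        fix i assume i: "i \<in> I"
        show "0 \<le> u' i" using F2 i e(1) by (simp add: u'_def)
      next
        fix l assume l: "l \<in> L"
        show "0 \<le> v' l"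
        proof (cases "l \<in> N")
          case False
          then have "v l \<in> A" using vpos l unfolding A_def by blast
          then show ?thesis using e(2) False by (auto simp: v'_def)
        next
          case True then show ?thesis using F3 l by (simp add: v'_def)
        qed
      qed
      then have o: "dual_objective I L c u v \<le> dual_objective I L c u' v'" by (rule opt)
      have "dual_objective I L c u' v' = dual_objective I L c u v + e * (real (card I) - card S)
               - e * (real (card I) - (\<Sum>l\<in>N. real (c l)))"
        unfolding dual_objective_def u'_def v'_def
        by (simp add: sum_subtractf sum.distrib right_diff_distrib sumIc sumNc)
      moreover have "e * (\<Sum>l\<in>N. real (c l)) < e * card S" using Slt e(1) by simp
      ultimately show False using o by (simp add: algebra_simps)
    qed
  qed
  obtain \<sigma> where s: "\<forall>i\<in>I. \<sigma> i \<in> L \<and> E i (\<sigma> i)" "\<forall>l\<in>L. card {i\<in>I. \<sigma> i = l} \<le> c l"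
    using hall_b[OF finI finL hallc] by blast
  have asg: "is_assignment I L c \<sigma>" using s unfolding is_assignment_def by blast
  have cnt: "\<forall>l\<in>L. card {i\<in>I. \<sigma> i = l} = c l" using counts_exact[OF finI finL cap asg] .
  have "utility I G \<sigma> = (\<Sum>i\<in>I. u i + v (\<sigma> i))"
    unfolding utility_def using s(1) unfolding E_def by (intro sum.cong) auto
  also have "\<dots> = (\<Sum>i\<in>I. u i) + (\<Sum>l\<in>L. real (card {i\<in>I. \<sigma> i = l}) * v l)"
    using sum_by_loc[OF finI finL, of \<sigma> v] s(1) by (simp add: sum.distrib)
  also have "\<dots> = dual_objective I L c u v" unfolding dual_objective_def using cnt by simp
  finally show ?thesis using asg by auto
qed



lemma lhs_bound:
  fixes G :: "'i \<Rightarrow> 'l \<Rightarrow> real"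
  assumes finI: "finite I" and finL: "finite L" and asg: "is_assignment I L c \<pi>"
    and feas: "dual_feasible I L G u v"
  shows "l1_dist I L (\<lambda>i l. if \<pi> i = l then u i + v l else G i l) G
         \<le> dual_objective I L c u v - utility I G \<pi>"
proof -
  have F1: "\<forall>i\<in>I. \<forall>l\<in>L. u i + v l \<ge> G i l" and F3: "\<forall>l\<in>L. v l \<ge> 0"
    using feas unfolding dual_feasible_def by auto
  have piL: "\<forall>i\<in>I. \<pi> i \<in> L" and cle: "\<forall>l\<in>L. card {i\<in>I. \<pi> i = l} \<le> c l"
    using asg unfolding is_assignment_def by auto
  have inner: "(\<Sum>l\<in>L. \<bar>(if \<pi> i = l then u i + v l else G i l) - G i l\<bar>) = u i + v (\<pi> i) - G i (\<pi> i)"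
    if i: "i \<in> I" for i
  proof -
    have "(\<Sum>l\<in>L. \<bar>(if \<pi> i = l then u i + v l else G i l) - G i l\<bar>)
        = (\<Sum>l\<in>L. if l = \<pi> i then \<bar>u i + v l - G i l\<bar> else 0)"
      by (rule sum.cong) auto
    also have "\<dots> = \<bar>u i + v (\<pi> i) - G i (\<pi> i)\<bar>" using finL piL i by (simp add: sum.delta)
    also have "\<dots> = u i + v (\<pi> i) - G i (\<pi> i)" using F1 piL i by auto
    finally show ?thesis .
  qed
  have "l1_dist I L (\<lambda>i l. if \<pi> i = l then u i + v l else G i l) G
      = (\<Sum>i\<in>I. u i + v (\<pi> i) - G i (\<pi> i))"
    unfolding l1_dist_def using inner by (rule sum.cong[OF refl])
  also have "\<dots> = (\<Sum>i\<in>I. u i) + (\<Sum>i\<in>I. v (\<pi> i)) - utility I G \<pi>"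
    unfolding utility_def by (simp add: sum_subtractf sum.distrib)
  also have "(\<Sum>i\<in>I. v (\<pi> i)) = (\<Sum>l\<in>L. real (card {i\<in>I. \<pi> i = l}) * v l)"
    using sum_by_loc[OF finI finL piL] .
  also have "\<dots> \<le> (\<Sum>l\<in>L. real (c l) * v l)"
  proof (rule sum_mono)
    fix l assume l: "l \<in> L"
    show "real (card {i\<in>I. \<pi> i = l}) * v l \<le> real (c l) * v l"
      using cle l F3 by (intro mult_right_mono) auto
  qed
  finally show ?thesis unfolding dual_objective_def by simp
qed

lemma rhs_bound:
  fixes G :: "'i \<Rightarrow> 'l \<Rightarrow> real"
  assumes finI: "finite I" and finL: "finite L" and asg: "is_assignment I L c \<sigma>"
    and opt: "optimal_assignment I L c g'' \<pi>"
  shows "utility I G \<sigma> - utility I G \<pi> \<le> l1_dist I L g'' G"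
proof -
  have sL: "\<forall>i\<in>I. \<sigma> i \<in> L" using asg unfolding is_assignment_def by auto
  have pL: "\<forall>i\<in>I. \<pi> i \<in> L" using opt unfolding optimal_assignment_def is_assignment_def by auto
  have uo: "utility I g'' \<sigma> \<le> utility I g'' \<pi>" using opt asg unfolding optimal_assignment_def by blast
  have per: "G i (\<sigma> i) - G i (\<pi> i) \<le> (g'' i (\<sigma> i) - g'' i (\<pi> i)) + (\<Sum>l\<in>L. \<bar>g'' i l - G i l\<bar>)"
    if i: "i \<in> I" for i
  proof (cases "\<sigma> i = \<pi> i")
    case True
    have "0 \<le> (\<Sum>l\<in>L. \<bar>g'' i l - G i l\<bar>)" by (rule sum_nonneg) auto
    then show ?thesis using True by simp
  next
    case False
    have "(\<Sum>l\<in>{\<sigma> i, \<pi> i}. \<bar>g'' i l - G i l\<bar>) \<le> (\<Sum>l\<in>L. \<bar>g'' i l - G i l\<bar>)"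
      using sL pL i finL by (intro sum_mono2) auto
    moreover have "(\<Sum>l\<in>{\<sigma> i, \<pi> i}. \<bar>g'' i l - G i l\<bar>) = \<bar>g'' i (\<sigma> i) - G i (\<sigma> i)\<bar> + \<bar>g'' i (\<pi> i) - G i (\<pi> i)\<bar>"
      using False by simp
    moreover have "G i (\<sigma> i) - g'' i (\<sigma> i) \<le> \<bar>g'' i (\<sigma> i) - G i (\<sigma> i)\<bar>" by linarith
    moreover have "g'' i (\<pi> i) - G i (\<pi> i) \<le> \<bar>g'' i (\<pi> i) - G i (\<pi> i)\<bar>" by linarith
    ultimately show ?thesis by linarith
  qed
  have "utility I G \<sigma> - utility I G \<pi> = (\<Sum>i\<in>I. G i (\<sigma> i) - G i (\<pi> i))"
    unfolding utility_def by (simp add: sum_subtractf)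
  also have "\<dots> \<le> (\<Sum>i\<in>I. (g'' i (\<sigma> i) - g'' i (\<pi> i)) + (\<Sum>l\<in>L. \<bar>g'' i l - G i l\<bar>))"
    using per by (rule sum_mono)
  also have "\<dots> = (utility I g'' \<sigma> - utility I g'' \<pi>) + l1_dist I L g'' G"
    unfolding utility_def l1_dist_def by (simp add: sum_subtractf sum.distrib)
  finally show ?thesis using uo by linarith
qed

theorem mainTheorem7:
  fixes I :: "'i set" and L :: "'l set" and c :: "'l \<Rightarrow> nat"
    and x :: "'i \<Rightarrow> 'x" and lr :: "'i \<Rightarrow> 'l" and y :: "'i \<Rightarrow> bool"
    and g :: "'l \<Rightarrow> 'x \<Rightarrow> real"
    and \<pi>' :: "'i \<Rightarrow> 'l" and u :: "'i \<Rightarrow> real" and v :: "'l \<Rightarrow> real"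
  assumes finI: "finite I" and finL: "finite L"
    and cap: "card I = (\<Sum>l\<in>L. c l)"
    and real_loc: "\<forall>i\<in>I. lr i \<in> L"
    and g_range: "\<forall>i\<in>I. \<forall>l\<in>L. 0 \<le> g l (x i) \<and> g l (x i) \<le> 1"
    and pi'_harmless: "harmless_assignment I L c y lr \<pi>'"
    and pi'_max: "\<forall>\<sigma>. harmless_assignment I L c y lr \<sigma> \<longrightarrow>
                    utility I (\<lambda>i l. g l (x i)) \<sigma> \<le> utility I (\<lambda>i l. g l (x i)) \<pi>'"
    and dual_opt: "dual_optimal I L c (\<lambda>i l. g l (x i)) u v"
  shows "\<forall>\<pi>'' g''. harmless_assignment I L c y lr \<pi>'' \<and> optimal_assignment I L c g'' \<pi>'' \<longrightarrow>
           l1_dist I L (\<lambda>i l. if \<pi>' i = l then u i + v l else g l (x i)) (\<lambda>i l. g l (x i))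
           \<le> l1_dist I L g'' (\<lambda>i l. g l (x i))"
proof (intro allI impI, elim conjE)
  fix \<pi>'' g'' assume h: "harmless_assignment I L c y lr \<pi>''" and o: "optimal_assignment I L c g'' \<pi>''"
  let ?G = "\<lambda>i l. g l (x i)"
  have Gnn: "\<forall>i\<in>I. \<forall>l\<in>L. 0 \<le> ?G i l" using g_range by auto
  obtain \<sigma> where s: "is_assignment I L c \<sigma>" "dual_objective I L c u v \<le> utility I ?G \<sigma>"
    using exists_good[OF finI finL cap Gnn dual_opt] by blast
  have asg': "is_assignment I L c \<pi>'" using pi'_harmless unfolding harmless_assignment_def by blast
  have feas: "dual_feasible I L ?G u v" using dual_opt unfolding dual_optimal_def by blast
  have "l1_dist I L (\<lambda>i l. if \<pi>' i = l then u i + v l else ?G i l) ?G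
       \<le> dual_objective I L c u v - utility I ?G \<pi>'"
    by (rule lhs_bound[OF finI finL asg' feas])
  also have "\<dots> \<le> utility I ?G \<sigma> - utility I ?G \<pi>''"
    using s(2) pi'_max h by force
  also have "\<dots> \<le> l1_dist I L g'' ?G" by (rule rhs_bound[OF finI finL s(1) o])
  finally show "l1_dist I L (\<lambda>i l. if \<pi>' i = l then u i + v l else g l (x i)) (\<lambda>i l. g l (x i))
           \<le> l1_dist I L g'' (\<lambda>i l. g l (x i))" .
qed

end
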